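(* Let $n\ge1$, $u,v\in\mathfrak{S}_n$ and $J,K\subseteq[n-1]$. Then: (i) if $u\le v$ then $u_J\le v_J$; and if $K\subseteq J$ then $u_K\ge u_J$; (ii) $u_J\wedge v_K=(u\wedge v)_{J\cup K}$; (iii) if $J\subseteq\mathrm{GDes}(v)$ and $K\subseteq\mathrm{GDes}(u)$, then $u_J\vee v_K=(u\vee v)_{J\cap K}$.
   Context: Permutations in one-line notation. For a sequence $(a_1,\ldots,a_m)$ of distinct integers, $\mathrm{st}(a_1,\ldots,a_m)\in\mathfrak{S}_m$ is the unique permutation $x$ with $x_i<x_j\iff a_i<a_j$. For $x\in\mathfrak{S}_a,y\in\mathfrak{S}_b$, $x\times y\in\mathfrak{S}_{a+b}$ has $(x\times y)(i)=x_i$ for $i\le a$ and $(x\times y)(a+j)=a+y_j$. For $u\in\mathfrak{S}_n$ and $J=\{p_1<\cdots<p_k\}\subseteq[n-1]$, $u_J=\mathrm{st}(u_1,\ldots,u_{p_1})\times\mathrm{st}(u_{p_1+1},\ldots,u_{p_2})\times\cdots\times\mathrm{st}(u_{p_k+1},\ldots,u_n)$, and $u_\emptyset=u$. Weak order: $u\le v$ iff $\mathrm{Inv}(u)\subseteq\mathrm{Inv}(v)$, $\mathrm{Inv}(u)=\{(i,j):i<j,u_i>u_j\}$; it is a lattice with meet $\wedge$ and join $\vee$. $\mathrm{GDes}(u)$ is the set of $p\in[n-1]$ with $u_i>u_j$ for all $i\le p<j$. *)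

theory Defs
  imports Main
begin

text \<open>Permutations of [n] in one-line notation, as lists (list index 0 is position 1).\<close>
definition Sn :: "nat \<Rightarrow> nat list set" where
  "Sn n = {u. distinct u \<and> set u = {1..n}}"

definition st :: "'a::linorder list \<Rightarrow> nat list" where
  "st xs = map (\<lambda>a. card {b \<in> set xs. b \<le> a}) xs"

definition pprod :: "nat list \<Rightarrow> nat list \<Rightarrow> nat list" where
  "pprod x y = x @ map (\<lambda>i. length x + i) y"

text \<open>u_J: cut u after positions p1 < ... < pk, standardize each block, take the product.\<close>
definition parab :: "nat list \<Rightarrow> nat set \<Rightarrow> nat list" where
  "parab u J = (let q = 0 # sorted_list_of_set J @ [length u] in
     foldr pprod (map (\<lambda>i. st (drop (q ! i) (take (q ! (i+1)) u))) [0..<length q - 1]) [])"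

definition Inv :: "nat list \<Rightarrow> (nat \<times> nat) set" where
  "Inv u = {(i, j). i < j \<and> j < length u \<and> u ! i > u ! j}"

definition weak_le :: "nat list \<Rightarrow> nat list \<Rightarrow> bool" where
  "weak_le u v \<longleftrightarrow> Inv u \<subseteq> Inv v"

definition wmeet :: "nat list \<Rightarrow> nat list \<Rightarrow> nat list" where
  "wmeet u v = (THE w. w \<in> Sn (length u) \<and> weak_le w u \<and> weak_le w v \<and>
     (\<forall>z \<in> Sn (length u). weak_le z u \<and> weak_le z v \<longrightarrow> weak_le z w))"

definition wjoin :: "nat list \<Rightarrow> nat list \<Rightarrow> nat list" where
  "wjoin u v = (THE w. w \<in> Sn (length u) \<and> weak_le u w \<and> weak_le v w \<and>
     (\<forall>z \<in> Sn (length u). weak_le u z \<and> weak_le v z \<longrightarrow> weak_le w z))"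

text \<open>Global descents (1-indexed positions p; list entries u!i, i<p are positions 1..p).\<close>
definition GDes :: "nat list \<Rightarrow> nat set" where
  "GDes u = {p. 1 \<le> p \<and> p < length u \<and>
     (\<forall>i j. i < p \<and> p \<le> j \<and> j < length u \<longrightarrow> u ! i > u ! j)}"

end

theory Submission
  imports Defs
begin


definition PP :: "nat \<Rightarrow> (nat \<times> nat) set" where
  "PP n = {(i, j). i < j \<and> j < n}"

definition tc :: "nat \<Rightarrow> (nat \<times> nat) set \<Rightarrow> bool" where
  "tc n T \<longleftrightarrow> T \<subseteq> PP n \<and> trans T \<and>
     (\<forall>i j k. i < j \<and> j < k \<and> (i, k) \<in> T \<longrightarrow> (i, j) \<in> T \<or> (j, k) \<in> T)"

lemma Sn_len: "u \<in> Sn n \<Longrightarrow> length u = n"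
  unfolding Sn_def using distinct_card[of u] by auto

lemma Sn_intro: "distinct w \<Longrightarrow> set w \<subseteq> {1..length w} \<Longrightarrow> w \<in> Sn (length w)"
  unfolding Sn_def using distinct_card[of w] card_subset_eq[of "{1..length w}" "set w"] by auto

lemma Inv_PP: "Inv u \<subseteq> PP (length u)"
  unfolding Inv_def PP_def by auto

lemma tc_Inv: "tc (length u) (Inv u)"
  unfolding tc_def
proof (intro conjI)
  show "Inv u \<subseteq> PP (length u)" by (rule Inv_PP)
  show "trans (Inv u)" unfolding trans_def Inv_def by auto
  show "\<forall>i j k. i < j \<and> j < k \<and> (i, k) \<in> Inv u \<longrightarrow> (i, j) \<in> Inv u \<or> (j, k) \<in> Inv u"
    unfolding Inv_def by auto
qed

lemma tc_compl: "tc n T \<Longrightarrow> tc n (PP n - T)"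
  unfolding tc_def trans_def PP_def by auto blast+

lemma Sn_rank:
  assumes "u \<in> Sn n" "i < n"
  shows "u ! i = card {j. j < n \<and> u ! j \<le> u ! i}"
proof -
  have d: "distinct u" and s: "set u = {1..n}" and l: "length u = n"
    using assms Sn_len unfolding Sn_def by auto
  have inj: "inj_on ((!) u) {j. j < n \<and> u ! j \<le> u ! i}"
    using inj_on_nth[OF d] l by auto
  have "(!) u ` {j. j < n \<and> u ! j \<le> u ! i} = {1..u ! i}"
  proof
    show "(!) u ` {j. j < n \<and> u ! j \<le> u ! i} \<subseteq> {1..u ! i}"
      using s l by (auto simp: set_conv_nth)
  next
    have ui: "u ! i \<le> n" using s l assms(2) nth_mem by fastforce
    show "{1..u ! i} \<subseteq> (!) u ` {j. j < n \<and> u ! j \<le> u ! i}"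
    proof
      fix x assume "x \<in> {1..u ! i}"
      then have "x \<in> set u" using s ui by auto
      then obtain j where "j < n" "u ! j = x" using l by (auto simp: in_set_conv_nth)
      then show "x \<in> (!) u ` {j. j < n \<and> u ! j \<le> u ! i}" using \<open>x \<in> {1..u ! i}\<close> by auto
    qed
  qed
  then show ?thesis using card_image[OF inj] by simp
qed

lemma Inv_inj:
  assumes "u \<in> Sn n" "v \<in> Sn n" "Inv u = Inv v"
  shows "u = v"
proof -
  have l: "length u = n" "length v = n" using assms Sn_len by auto
  have du: "distinct u" "distinct v" using assms unfolding Sn_def by auto
  have key: "u ! j \<le> u ! i \<longleftrightarrow> v ! j \<le> v ! i" if "i < n" "j < n" for i j
  proof -
    consider "j < i" | "j = i" | "i < j" by linarith
    then show ?thesis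
    proof cases
      case 1
      have "(j, i) \<in> Inv u \<longleftrightarrow> (j, i) \<in> Inv v" using assms(3) by simp
      then show ?thesis using 1 that l unfolding Inv_def by auto
    next
      case 2 then show ?thesis by simp
    next
      case 3
      have "(i, j) \<in> Inv u \<longleftrightarrow> (i, j) \<in> Inv v" using assms(3) by simp
      moreover have "u ! i \<noteq> u ! j" "v ! i \<noteq> v ! j" using du 3 that l nth_eq_iff_index_eq by fastforce+
      ultimately show ?thesis using 3 that l unfolding Inv_def by auto
    qed
  qed
  show ?thesis
  proof (rule nth_equalityI)
    show "length u = length v" using l by simp
    fix i assume "i < length u"
    then have i: "i < n" using l by simp
    have "{j. j < n \<and> u ! j \<le> u ! i} = {j. j < n \<and> v ! j \<le> v ! i}" using key[OF i] by auto
    then show "u ! i = v ! i" using Sn_rank[OF assms(1) i] Sn_rank[OF assms(2) i] by simp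
  qed
qed

lemma tc_realize:
  assumes "tc n T"
  shows "\<exists>w \<in> Sn n. Inv w = T"
proof -
  have TP: "T \<subseteq> PP n" and tr: "trans T"
    and co: "\<And>i j k. i < j \<Longrightarrow> j < k \<Longrightarrow> (i, k) \<in> T \<Longrightarrow> (i, j) \<in> T \<or> (j, k) \<in> T"
    using assms unfolding tc_def by blast+
  define lt where "lt i j \<longleftrightarrow> (i < j \<and> (i, j) \<notin> T) \<or> (j < i \<and> (j, i) \<in> T)" for i j
  have irr: "\<not> lt i i" for i unfolding lt_def by auto
  have tot: "i \<noteq> j \<Longrightarrow> lt i j \<or> lt j i" for i j unfolding lt_def by auto
  have asy: "lt i j \<Longrightarrow> \<not> lt j i" for i j unfolding lt_def by auto
  have trl: "lt a c" if "lt a b" "lt b c" for a b c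
  proof -
    have ab: "a \<noteq> b" "b \<noteq> c" using that irr by auto
    have "a \<noteq> c" using that asy by auto
    then consider "a < b" "b < c" | "a < c" "c < b" | "b < a" "a < c"
      | "b < c" "c < a" | "c < a" "a < b" | "c < b" "b < a" using ab by linarith
    then show ?thesis
    proof cases
      case 1 then show ?thesis using that co[of a b c] unfolding lt_def by auto
    next
      case 2
      have "(a,b) \<notin> T" "(c,b) \<in> T" using 2 that unfolding lt_def by auto
      then have "(a,c) \<notin> T" using transD[OF tr, of a c b] by blast
      then show ?thesis using 2 unfolding lt_def by auto
    next
      case 3
      have "(b,a) \<in> T" "(b,c) \<notin> T" using 3 that unfolding lt_def by auto
      then have "(a,c) \<notin> T" using transD[OF tr, of b a c] by blast
      then show ?thesis using 3 unfolding lt_def by auto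
    next
      case 4
      have "(b,a) \<in> T" "(b,c) \<notin> T" using 4 that unfolding lt_def by auto
      then have "(c,a) \<in> T" using co[of b c a] 4 by blast
      then show ?thesis using 4 unfolding lt_def by auto
    next
      case 5
      have "(c,b) \<in> T" "(a,b) \<notin> T" using 5 that unfolding lt_def by auto
      then have "(c,a) \<in> T" using co[of c a b] 5 by blast
      then show ?thesis using 5 unfolding lt_def by auto
    next
      case 6
      have "(c,b) \<in> T" "(b,a) \<in> T" using 6 that unfolding lt_def by auto
      then have "(c,a) \<in> T" using transD[OF tr, of c b a] by blast
      then show ?thesis using 6 unfolding lt_def by auto
    qed
  qed
  define r where "r i = Suc (card {j. j < n \<and> lt j i})" for i
  define w where "w = map r [0..<n]"
  have lw: "length w = n" unfolding w_def by simp
  have wn: "w ! i = r i" if "i < n" for i using that unfolding w_def by simp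
  have mono: "r i < r k" if "lt i k" "i < n" for i k
  proof -
    have "{j. j < n \<and> lt j i} \<subseteq> {j. j < n \<and> lt j k}" using trl that by auto
    moreover have "i \<in> {j. j < n \<and> lt j k}" "i \<notin> {j. j < n \<and> lt j i}" using that irr by auto
    ultimately have "{j. j < n \<and> lt j i} \<subset> {j. j < n \<and> lt j k}" by blast
    then show ?thesis unfolding r_def by (simp add: psubset_card_mono)
  qed
  have rle: "r i \<le> n" if "i < n" for i
  proof -
    have "{j. j < n \<and> lt j i} \<subseteq> {..<n} - {i}" using irr by auto
    then have "card {j. j < n \<and> lt j i} \<le> card ({..<n} - {i})" by (intro card_mono) auto
    then show ?thesis using that unfolding r_def by simp
  qed
  have dw: "distinct w"
    unfolding distinct_conv_nth lw
  proof (intro allI impI)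
    fix i k assume "i < n" "k < n" "i \<noteq> k"
    then show "w ! i \<noteq> w ! k" using tot[of i k] mono[of i k] mono[of k i] wn by fastforce
  qed
  have sw: "set w \<subseteq> {1..length w}"
    using rle lw unfolding w_def r_def by auto
  have wS: "w \<in> Sn n" using Sn_intro[OF dw sw] lw by simp
  have "Inv w = T"
  proof
    show "Inv w \<subseteq> T"
    proof
      fix x assume "x \<in> Inv w"
      then obtain i j where x: "x = (i, j)" "i < j" "j < n" "w ! i > w ! j" unfolding Inv_def lw by auto
      then have "\<not> lt i j" using mono[of i j] wn by fastforce
      then show "x \<in> T" using x unfolding lt_def by auto
    qed
  next
    show "T \<subseteq> Inv w"
    proof
      fix x assume "x \<in> T"
      then obtain i j where x: "x = (i, j)" "i < j" "j < n" using TP unfolding PP_def by auto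
      then have "lt j i" using \<open>x \<in> T\<close> unfolding lt_def by auto
      then have "w ! j < w ! i" using mono[of j i] wn x by fastforce
      then show "x \<in> Inv w" using x lw unfolding Inv_def by auto
    qed
  qed
  then show ?thesis using wS by blast
qed


lemma tc_trancl:
  assumes "tc n T1" "tc n T2"
  shows "tc n ((T1 \<union> T2)\<^sup>+)"
proof -
  let ?R = "T1 \<union> T2"
  have RP: "?R \<subseteq> PP n" using assms unfolding tc_def by auto
  have tP: "trans (PP n)" unfolding trans_def PP_def by auto
  have sub: "?R\<^sup>+ \<subseteq> PP n" using trancl_mono[of _ ?R "PP n"] RP tP trancl_id by blast
  have co: "\<And>i j k. i < j \<Longrightarrow> j < k \<Longrightarrow> (i, k) \<in> ?R \<Longrightarrow> (i, j) \<in> ?R \<or> (j, k) \<in> ?R"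
    using assms unfolding tc_def by blast
  have main: "(i, k) \<in> ?R\<^sup>+ \<Longrightarrow> \<forall>j. i < j \<and> j < k \<longrightarrow> (i, j) \<in> ?R\<^sup>+ \<or> (j, k) \<in> ?R\<^sup>+" for i k
  proof (induction rule: trancl_induct)
    case (base y)
    then show ?case using co by blast
  next
    case (step y z)
    show ?case
    proof (intro allI impI)
      fix j assume j: "i < j \<and> j < z"
      have "y < z" using step(2) RP unfolding PP_def by auto
      consider "j < y" | "j = y" | "y < j" by linarith
      then show "(i, j) \<in> ?R\<^sup>+ \<or> (j, z) \<in> ?R\<^sup>+"
      proof cases
        case 1
        then have "(i, j) \<in> ?R\<^sup>+ \<or> (j, y) \<in> ?R\<^sup>+" using step(3) j by blast
        then show ?thesis using step(2) by (meson trancl.trancl_into_trancl)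
      next
        case 2 then show ?thesis using step(1) by simp
      next
        case 3
        then have "(y, j) \<in> ?R \<or> (j, z) \<in> ?R" using co[of y j z] j step(2) by blast
        then show ?thesis using step(1) by (meson r_into_trancl trancl.trancl_into_trancl)
      qed
    qed
  qed
  show ?thesis unfolding tc_def using sub main trans_trancl by blast
qed

lemma join_ex:
  assumes "u \<in> Sn n" "v \<in> Sn n"
  shows "wjoin u v \<in> Sn n \<and> Inv (wjoin u v) = (Inv u \<union> Inv v)\<^sup>+"
proof -
  have lu: "length u = n" using assms Sn_len by auto
  have "tc n ((Inv u \<union> Inv v)\<^sup>+)"
    using tc_trancl tc_Inv[of u] tc_Inv[of v] assms Sn_len by metis
  then obtain w where w: "w \<in> Sn n" "Inv w = (Inv u \<union> Inv v)\<^sup>+" using tc_realize by blast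
  let ?Q = "\<lambda>w. w \<in> Sn (length u) \<and> weak_le u w \<and> weak_le v w \<and>
     (\<forall>z \<in> Sn (length u). weak_le u z \<and> weak_le v z \<longrightarrow> weak_le w z)"
  have Qw: "?Q w"
  proof -
    have "weak_le w z" if "z \<in> Sn n" "weak_le u z" "weak_le v z" for z
    proof -
      have "trans (Inv z)" using tc_Inv[of z] unfolding tc_def by blast
      moreover have "Inv u \<union> Inv v \<subseteq> Inv z" using that unfolding weak_le_def by auto
      ultimately show ?thesis using w(2) unfolding weak_le_def
        by (metis trancl_id trancl_mono subsetI)
    qed
    then show ?thesis using w lu unfolding weak_le_def by auto
  qed
  have "wjoin u v = w"
    unfolding wjoin_def
  proof (rule the_equality)
    show "?Q w" by (rule Qw)
    fix w' assume "?Q w'"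
    then have "Inv w' = Inv w" using Qw lu w(1) unfolding weak_le_def by auto
    then show "w' = w" using Inv_inj \<open>?Q w'\<close> w(1) lu by blast
  qed
  then show ?thesis using w by simp
qed

lemma meet_ex:
  assumes "u \<in> Sn n" "v \<in> Sn n"
  shows "wmeet u v \<in> Sn n \<and> weak_le (wmeet u v) u \<and> weak_le (wmeet u v) v \<and>
     (\<forall>z \<in> Sn n. weak_le z u \<and> weak_le z v \<longrightarrow> weak_le z (wmeet u v))"
proof -
  have lu: "length u = n" "length v = n" using assms Sn_len by auto
  let ?T = "PP n - (PP n - Inv u \<union> (PP n - Inv v))\<^sup>+"
  have "tc n ?T"
    using tc_compl tc_trancl tc_compl tc_Inv[of u] tc_Inv[of v] lu by metis
  then obtain w where w: "w \<in> Sn n" "Inv w = ?T" using tc_realize by blast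
  let ?Q = "\<lambda>w. w \<in> Sn (length u) \<and> weak_le w u \<and> weak_le w v \<and>
     (\<forall>z \<in> Sn (length u). weak_le z u \<and> weak_le z v \<longrightarrow> weak_le z w)"
  have Qw: "?Q w"
  proof -
    have "weak_le z w" if "z \<in> Sn n" "weak_le z u" "weak_le z v" for z
    proof -
      have tz: "tc n (PP n - Inv z)" using tc_compl tc_Inv[of z] that Sn_len by metis
      then have "trans (PP n - Inv z)" unfolding tc_def by blast
      moreover have "PP n - Inv u \<union> (PP n - Inv v) \<subseteq> PP n - Inv z" using that unfolding weak_le_def by auto
      ultimately have "(PP n - Inv u \<union> (PP n - Inv v))\<^sup>+ \<subseteq> PP n - Inv z"
        by (metis trancl_id trancl_mono subsetI)
      moreover have "Inv z \<subseteq> PP n" using Inv_PP[of z] that Sn_len by metis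
      ultimately show ?thesis using w(2) unfolding weak_le_def by blast
    qed
    moreover have "Inv w \<subseteq> Inv u" "Inv w \<subseteq> Inv v" using w(2) by auto
    ultimately show ?thesis using w lu unfolding weak_le_def by auto
  qed
  have "wmeet u v = w"
    unfolding wmeet_def
  proof (rule the_equality)
    show "?Q w" by (rule Qw)
    fix w' assume "?Q w'"
    then have "Inv w' = Inv w" using Qw lu w(1) unfolding weak_le_def by auto
    then show "w' = w" using Inv_inj \<open>?Q w'\<close> w(1) lu by blast
  qed
  then show ?thesis using Qw lu by simp
qed


definition BB :: "nat set \<Rightarrow> (nat \<times> nat) set" where
  "BB J = {(i, j). \<not> (\<exists>p\<in>J. i < p \<and> p \<le> j)}"

lemma st_len[simp]: "length (st s) = length s" unfolding st_def by simp

lemma st_nth: "i < length s \<Longrightarrow> st s ! i = card {b \<in> set s. b \<le> s ! i}"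
  unfolding st_def by simp

lemma st_less:
  assumes "distinct s" "i < length s" "j < length s"
  shows "st s ! i < st s ! j \<longleftrightarrow> s ! i < s ! j"
proof -
  have m: "st s ! i < st s ! j" if "s ! i < s ! j" "i < length s" "j < length s" for i j
  proof -
    have "{b \<in> set s. b \<le> s ! i} \<subseteq> {b \<in> set s. b \<le> s ! j}"
      using that by auto
    moreover have "s ! j \<in> {b \<in> set s. b \<le> s ! j}" "s ! j \<notin> {b \<in> set s. b \<le> s ! i}"
      using that nth_mem[of j s] by auto
    ultimately have "{b \<in> set s. b \<le> s ! i} \<subset> {b \<in> set s. b \<le> s ! j}" by blast
    then have "card {b \<in> set s. b \<le> s ! i} < card {b \<in> set s. b \<le> s ! j}"
      by (intro psubset_card_mono) auto
    then show ?thesis using that st_nth[of i s] st_nth[of j s] by simp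
  qed
  have ne: "s ! i \<noteq> s ! j \<or> i = j" using assms nth_eq_iff_index_eq by blast
  show ?thesis
  proof
    assume "st s ! i < st s ! j"
    then show "s ! i < s ! j" using m[of j i] assms ne by (cases "s ! j < s ! i") auto
  next
    assume "s ! i < s ! j"
    then show "st s ! i < st s ! j" using m[of i j] assms by auto
  qed
qed

lemma st_Sn:
  assumes "distinct s"
  shows "st s \<in> Sn (length s)"
proof -
  have d: "distinct (st s)"
    unfolding distinct_conv_nth
  proof (intro allI impI)
    fix i j assume "i < length (st s)" "j < length (st s)" "i \<noteq> j"
    then have "s ! i \<noteq> s ! j" using assms nth_eq_iff_index_eq by auto
    then show "st s ! i \<noteq> st s ! j" using st_less[OF assms] \<open>i < length (st s)\<close> \<open>j < length (st s)\<close>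
      by (cases "s ! i < s ! j") (auto simp: linorder_neq_iff)
  qed
  have "set (st s) \<subseteq> {1..length (st s)}"
  proof
    fix x assume "x \<in> set (st s)"
    then obtain i where i: "i < length s" "x = st s ! i" by (auto simp: in_set_conv_nth)
    have "s ! i \<in> {b \<in> set s. b \<le> s ! i}" using i by auto
    then have "card {b \<in> set s. b \<le> s ! i} > 0" by (subst card_gt_0_iff) auto
    then have "1 \<le> x" using i st_nth[of i s] by simp
    moreover have "x \<le> length s" using i st_nth[of i s] card_mono[of "set s" "{b \<in> set s. b \<le> s ! i}"]
        distinct_card[OF assms] by auto
    ultimately show "x \<in> {1..length (st s)}" by simp
  qed
  then show ?thesis using Sn_intro[OF d] by simp
qed

lemma Sn_pos: "y \<in> Sn b \<Longrightarrow> i < length y \<Longrightarrow> 1 \<le> y ! i \<and> y ! i \<le> b"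
  unfolding Sn_def using nth_mem by fastforce

lemma pprod_Sn:
  assumes "x \<in> Sn a" "y \<in> Sn b"
  shows "pprod x y \<in> Sn (a + b)"
  using assms Sn_len[OF assms(1)] unfolding Sn_def pprod_def
  by (auto simp: distinct_map inj_on_def image_iff)

lemma pprod_inv:
  assumes "x \<in> Sn a" "y \<in> Sn b" "i < j" "j < a + b"
  shows "(i, j) \<in> Inv (pprod x y) \<longleftrightarrow>
    (j < a \<and> (i, j) \<in> Inv x) \<or> (a \<le> i \<and> (i - a, j - a) \<in> Inv y)"
proof -
  have lx: "length x = a" and ly: "length y = b" using assms Sn_len by auto
  have lp: "length (pprod x y) = a + b" unfolding pprod_def using lx ly by simp
  consider "j < a" | "a \<le> i" | "i < a" "a \<le> j" by linarith
  then show ?thesis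
  proof cases
    case 1 then show ?thesis using assms lx lp unfolding Inv_def pprod_def by (auto simp: nth_append)
  next
    case 2 then show ?thesis using assms lx ly lp unfolding Inv_def pprod_def by (auto simp: nth_append)
  next
    case 3
    have "x ! i \<le> a" using Sn_pos[OF assms(1)] 3 lx by auto
    moreover have "1 \<le> y ! (j - a)" using Sn_pos[OF assms(2)] 3 ly assms by auto
    ultimately show ?thesis using 3 assms lx ly lp unfolding Inv_def pprod_def by (auto simp: nth_append)
  qed
qed

fun cuts :: "nat list list \<Rightarrow> nat set" where
  "cuts [] = {}"
| "cuts (s # r) = insert (length s) ((+) (length s) ` cuts r)"

lemma foldr_parab:
  "distinct (concat segs) \<Longrightarrow> foldr pprod (map st segs) [] \<in> Sn (length (concat segs)) \<and>
     Inv (foldr pprod (map st segs) []) = Inv (concat segs) \<inter> BB (cuts segs)"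
proof (induction segs)
  case Nil
  then show ?case unfolding Sn_def Inv_def by simp
next
  case (Cons s r)
  let ?P = "foldr pprod (map st r) []"
  let ?a = "length s" and ?b = "length (concat r)"
  have ds: "distinct s" and dr: "distinct (concat r)" using Cons.prems by auto
  have IH: "?P \<in> Sn ?b" "Inv ?P = Inv (concat r) \<inter> BB (cuts r)" using Cons.IH dr by auto
  have ss: "st s \<in> Sn ?a" using st_Sn[OF ds] .
  have eq: "foldr pprod (map st (s # r)) [] = pprod (st s) ?P" by simp
  have S: "pprod (st s) ?P \<in> Sn (length (concat (s # r)))" using pprod_Sn[OF ss IH(1)] by simp
  have lp: "length (pprod (st s) ?P) = ?a + ?b" using Sn_len[OF S] by simp
  have I: "Inv (pprod (st s) ?P) = Inv (concat (s # r)) \<inter> BB (cuts (s # r))"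
  proof (rule set_eqI)
    fix x :: "nat \<times> nat"
    obtain i j where x: "x = (i, j)" by fastforce
    show "x \<in> Inv (pprod (st s) ?P) \<longleftrightarrow> x \<in> Inv (concat (s # r)) \<inter> BB (cuts (s # r))"
    proof (cases "i < j \<and> j < ?a + ?b")
      case False
      then show ?thesis using x lp unfolding Inv_def by auto
    next
      case True
      have pi: "(i, j) \<in> Inv (pprod (st s) ?P) \<longleftrightarrow>
          (j < ?a \<and> (i, j) \<in> Inv (st s)) \<or> (?a \<le> i \<and> (i - ?a, j - ?a) \<in> Inv ?P)"
        using pprod_inv[OF ss IH(1)] True by blast
      consider "j < ?a" | "?a \<le> i" | "i < ?a" "?a \<le> j" by linarith
      then show ?thesis
      proof cases
        case 1
        have "(i, j) \<in> Inv (st s) \<longleftrightarrow> (i, j) \<in> Inv (concat (s # r))"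
          using st_less[OF ds, of j i] 1 True unfolding Inv_def by (auto simp: nth_append)
        moreover have "(i, j) \<in> BB (cuts (s # r))" using 1 unfolding BB_def by auto
        ultimately show ?thesis using pi 1 x True by auto
      next
        case 2
        have "(i - ?a, j - ?a) \<in> Inv (concat r) \<longleftrightarrow> (i, j) \<in> Inv (concat (s # r))"
          using 2 True unfolding Inv_def by (auto simp: nth_append)
        moreover have "(i - ?a, j - ?a) \<in> BB (cuts r) \<longleftrightarrow> (i, j) \<in> BB (cuts (s # r))"
          using 2 True unfolding BB_def by force
        moreover have "(i, j) \<in> Inv (pprod (st s) ?P) \<longleftrightarrow> (i - ?a, j - ?a) \<in> Inv ?P"
          using pi 2 True by auto
        moreover have "(i - ?a, j - ?a) \<in> Inv ?P \<longleftrightarrow> (i - ?a, j - ?a) \<in> Inv (concat r) \<and> (i - ?a, j - ?a) \<in> BB (cuts r)"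
          using IH(2) by blast
        ultimately show ?thesis unfolding x by blast
      next
        case 3
        have "(i, j) \<notin> BB (cuts (s # r))" using 3 unfolding BB_def by auto
        then show ?thesis using pi 3 x by auto
      qed
    qed
  qed
  show ?case using S I eq by simp
qed



fun sg :: "nat list \<Rightarrow> nat list \<Rightarrow> nat list list" where
  "sg u (a # b # rest) = drop a (take b u) # sg u (b # rest)"
| "sg u _ = []"

lemma map_sg: "map (\<lambda>i. drop (q ! i) (take (q ! (i + 1)) u)) [0..<length q - 1] = sg u q"
proof (induction u q rule: sg.induct)
  case (1 u a b rest)
  have "[0..<length (a # b # rest) - 1] = [0..<Suc (length rest)]" by simp
  then show ?case using 1 by (simp only: map_upt_Suc) simp
qed auto

lemma sg_props:
  "sorted q \<Longrightarrow> q \<noteq> [] \<Longrightarrow> last q \<le> length u \<Longrightarrow>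
    concat (sg u q) = drop (hd q) (take (last q) u) \<and> cuts (sg u q) = (\<lambda>x. x - hd q) ` set (tl q)"
proof (induction u q rule: sg.induct)
  case (1 u a b rest)
  have ab: "a \<le> b" and rb: "\<forall>x\<in>set rest. b \<le> x" and s2: "sorted (b # rest)" using "1.prems"(1) by auto
  have L: "last (a # b # rest) = last (b # rest)" by simp
  have bL: "b \<le> last (b # rest)" using rb by (cases rest) auto
  have IH: "concat (sg u (b # rest)) = drop b (take (last (b # rest)) u)"
      "cuts (sg u (b # rest)) = (\<lambda>x. x - b) ` set rest"
    using "1.IH" s2 "1.prems"(3) L by auto
  have c: "drop a (take b u) @ drop b (take (last (b # rest)) u) = drop a (take (last (b # rest)) u)"
  proof -
    have "take (last (b # rest)) u = take b u @ drop b (take (last (b # rest)) u)"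
      using bL by (metis append_take_drop_id min.absorb1 take_take)
    moreover have "a - length (take b u) = 0" using ab bL "1.prems"(3) L by auto
    ultimately show ?thesis by (metis drop_append drop0)
  qed
  have lb: "length (drop a (take b u)) = b - a" using ab bL "1.prems"(3) L by auto
  have "cuts (sg u (a # b # rest)) = insert (b - a) ((+) (b - a) ` ((\<lambda>x. x - b) ` set rest))"
    using IH(2) lb by simp
  also have "\<dots> = (\<lambda>x. x - a) ` set (b # rest)" using ab rb by (auto simp: image_iff)
  finally show ?case using IH(1) c L by simp
qed auto

lemma parab_props:
  assumes "u \<in> Sn n" "J \<subseteq> {1..n-1}"
  shows "parab u J \<in> Sn n \<and> Inv (parab u J) = Inv u \<inter> BB J"
proof -
  have lu: "length u = n" using Sn_len[OF assms(1)] .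
  have du: "distinct u" using assms(1) unfolding Sn_def by auto
  have fJ: "finite J" using assms(2) finite_subset by blast
  define q where "q = 0 # sorted_list_of_set J @ [length u]"
  have sq: "sorted q" unfolding q_def using fJ assms(2) lu
    by (auto simp: sorted_append subset_iff)
  have ne: "q \<noteq> []" and hq: "hd q = 0" and lq: "last q = length u" unfolding q_def by auto
  have tq: "set (tl q) = J \<union> {n}" unfolding q_def using fJ lu by auto
  have P: "parab u J = foldr pprod (map st (sg u q)) []"
    unfolding parab_def q_def[symmetric] Let_def map_sg[symmetric] by (simp add: comp_def)
  have sp: "concat (sg u q) = u" "cuts (sg u q) = J \<union> {n}"
    using sg_props[OF sq ne] lq hq tq by auto
  have F: "parab u J \<in> Sn n" "Inv (parab u J) = Inv u \<inter> BB (J \<union> {n})"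
    using foldr_parab[of "sg u q"] sp du lu P by auto
  have "Inv u \<inter> BB (J \<union> {n}) = Inv u \<inter> BB J"
    using lu unfolding Inv_def BB_def by auto
  then show ?thesis using F by simp
qed

lemma cross_lemma:
  assumes tz: "trans (Inv z)"
    and A1: "Inv u \<inter> BB J \<subseteq> Inv z" and A2: "Inv v \<inter> BB K \<subseteq> Inv z"
    and G1: "PP n - BB J \<subseteq> Inv v" and G2: "PP n - BB K \<subseteq> Inv u"
  shows "(i, k) \<in> PP n \<Longrightarrow> (i, k) \<notin> BB J \<Longrightarrow> (i, k) \<notin> BB K \<Longrightarrow> (i, k) \<in> BB (J \<inter> K)
    \<Longrightarrow> (i, k) \<in> Inv z"
proof (induction "k - i" arbitrary: i rule: less_induct)
  case less
  have ik: "i < k" "k < n" using less.prems(1) unfolding PP_def by auto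
  have exJ: "\<exists>p. p \<in> J \<and> i < p \<and> p \<le> k" using less.prems(2) unfolding BB_def by auto
  have exK: "\<exists>p. p \<in> K \<and> i < p \<and> p \<le> k" using less.prems(3) unfolding BB_def by auto
  define p where "p = (LEAST p. p \<in> J \<and> i < p \<and> p \<le> k)"
  define p' where "p' = (LEAST p. p \<in> K \<and> i < p \<and> p \<le> k)"
  have p: "p \<in> J" "i < p" "p \<le> k" using LeastI_ex[OF exJ] unfolding p_def by auto
  have pm: "\<And>x. x \<in> J \<Longrightarrow> i < x \<Longrightarrow> x \<le> k \<Longrightarrow> p \<le> x" unfolding p_def by (simp add: Least_le)
  have p': "p' \<in> K" "i < p'" "p' \<le> k" using LeastI_ex[OF exK] unfolding p'_def by auto
  have pm': "\<And>x. x \<in> K \<Longrightarrow> i < x \<Longrightarrow> x \<le> k \<Longrightarrow> p' \<le> x" unfolding p'_def by (simp add: Least_le)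
  have "p \<noteq> p'" using p p' less.prems(4) unfolding BB_def by auto
  then consider "p < p'" | "p' < p" by linarith
  then show ?case
  proof cases
    case 1
    define j where "j = p' - 1"
    have j: "i < j" "j < k" "p \<le> j" "j < p'" using 1 p p' unfolding j_def by auto
    have ijP: "(i, j) \<in> PP n" "(j, k) \<in> PP n" using j ik unfolding PP_def by auto
    have "(i, j) \<notin> BB J" using p j unfolding BB_def by auto
    moreover have "(i, j) \<in> BB K" using pm' j ik unfolding BB_def by force
    ultimately have ij: "(i, j) \<in> Inv z" using G1 A2 ijP by blast
    have nK: "(j, k) \<notin> BB K" using p' j unfolding BB_def by auto
    have jk: "(j, k) \<in> Inv z"
    proof (cases "(j, k) \<in> BB J")
      case True
      then show ?thesis using G2 A1 ijP nK by blast
    next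
      case False
      have "(j, k) \<in> BB (J \<inter> K)" using less.prems(4) j unfolding BB_def by auto
      moreover have "k - j < k - i" using j by auto
      ultimately show ?thesis using less.hyps[of j] ijP False nK by blast
    qed
    show ?thesis using tz ij jk unfolding trans_def by blast
  next
    case 2
    define j where "j = p - 1"
    have j: "i < j" "j < k" "p' \<le> j" "j < p" using 2 p p' unfolding j_def by auto
    have ijP: "(i, j) \<in> PP n" "(j, k) \<in> PP n" using j ik unfolding PP_def by auto
    have "(i, j) \<notin> BB K" using p' j unfolding BB_def by auto
    moreover have "(i, j) \<in> BB J" using pm j ik unfolding BB_def by force
    ultimately have ij: "(i, j) \<in> Inv z" using G2 A1 ijP by blast
    have nJ: "(j, k) \<notin> BB J" using p j unfolding BB_def by auto
    have jk: "(j, k) \<in> Inv z"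
    proof (cases "(j, k) \<in> BB K")
      case True
      then show ?thesis using G1 A2 ijP nJ by blast
    next
      case False
      have "(j, k) \<in> BB (J \<inter> K)" using less.prems(4) j unfolding BB_def by auto
      moreover have "k - j < k - i" using j by auto
      ultimately show ?thesis using less.hyps[of j] ijP False nJ by blast
    qed
    show ?thesis using tz ij jk unfolding trans_def by blast
  qed
qed

lemma GDes_cross:
  assumes "J \<subseteq> GDes v" "length v = n"
  shows "PP n - BB J \<subseteq> Inv v"
proof
  fix x assume "x \<in> PP n - BB J"
  then obtain i j p where x: "x = (i, j)" "i < j" "j < n" "p \<in> J" "i < p" "p \<le> j"
    unfolding PP_def BB_def by auto
  then have "v ! i > v ! j" using assms unfolding GDes_def by blast
  then show "x \<in> Inv v" using x assms unfolding Inv_def by auto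
qed

theorem mainTheorem6:
  fixes n :: nat and u v :: "nat list" and J K :: "nat set"
  assumes "n \<ge> 1" and "u \<in> Sn n" and "v \<in> Sn n"
    and "J \<subseteq> {1..n-1}" and "K \<subseteq> {1..n-1}"
  shows "(weak_le u v \<longrightarrow> weak_le (parab u J) (parab v J))
    \<and> (K \<subseteq> J \<longrightarrow> weak_le (parab u J) (parab u K))
    \<and> wmeet (parab u J) (parab v K) = parab (wmeet u v) (J \<union> K)
    \<and> (J \<subseteq> GDes v \<and> K \<subseteq> GDes u \<longrightarrow>
         wjoin (parab u J) (parab v K) = parab (wjoin u v) (J \<inter> K))"
proof -
  have uS: "u \<in> Sn n" and vS: "v \<in> Sn n" using assms by auto
  have lu: "length u = n" "length v = n" using uS vS Sn_len by auto
  have pJ: "parab u J \<in> Sn n" "Inv (parab u J) = Inv u \<inter> BB J" using parab_props[OF uS assms(4)] by auto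
  have pvJ: "parab v J \<in> Sn n" "Inv (parab v J) = Inv v \<inter> BB J" using parab_props[OF vS assms(4)] by auto
  have pK: "parab u K \<in> Sn n" "Inv (parab u K) = Inv u \<inter> BB K" using parab_props[OF uS assms(5)] by auto
  have pvK: "parab v K \<in> Sn n" "Inv (parab v K) = Inv v \<inter> BB K" using parab_props[OF vS assms(5)] by auto
  have lpJ: "length (parab u J) = n" using pJ Sn_len by auto
  have JK1: "J \<union> K \<subseteq> {1..n-1}" "J \<inter> K \<subseteq> {1..n-1}" using assms by auto
  have BBU: "BB (J \<union> K) = BB J \<inter> BB K" unfolding BB_def by auto
  have BBI: "BB J \<subseteq> BB (J \<inter> K)" "BB K \<subseteq> BB (J \<inter> K)" unfolding BB_def by auto
  have i1: "weak_le u v \<longrightarrow> weak_le (parab u J) (parab v J)"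
    using pJ pvJ unfolding weak_le_def by auto
  have i2: "K \<subseteq> J \<longrightarrow> weak_le (parab u J) (parab u K)"
    using pJ pK unfolding weak_le_def BB_def by auto
  have ii: "wmeet (parab u J) (parab v K) = parab (wmeet u v) (J \<union> K)"
  proof -
    define w where "w = wmeet u v"
    have w: "w \<in> Sn n" "weak_le w u" "weak_le w v"
      "\<forall>z \<in> Sn n. weak_le z u \<and> weak_le z v \<longrightarrow> weak_le z w"
      using meet_ex[OF uS vS] unfolding w_def by auto
    define M where "M = parab w (J \<union> K)"
    have M: "M \<in> Sn n" "Inv M = Inv w \<inter> BB (J \<union> K)" using parab_props[OF w(1) JK1(1)] unfolding M_def by auto
    let ?Q = "\<lambda>x. x \<in> Sn (length (parab u J)) \<and> weak_le x (parab u J) \<and> weak_le x (parab v K) \<and>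
     (\<forall>z \<in> Sn (length (parab u J)). weak_le z (parab u J) \<and> weak_le z (parab v K) \<longrightarrow> weak_le z x)"
    have QM: "?Q M"
    proof -
      have "weak_le M (parab u J)" "weak_le M (parab v K)"
        using M(2) pJ(2) pvK(2) w(2,3) BBU unfolding weak_le_def by auto
      moreover have "weak_le z M" if "z \<in> Sn n" "weak_le z (parab u J)" "weak_le z (parab v K)" for z
      proof -
        have "weak_le z u" "weak_le z v" using that pJ(2) pvK(2) unfolding weak_le_def by auto
        then have "Inv z \<subseteq> Inv w" using w(4) that(1) unfolding weak_le_def by auto
        moreover have "Inv z \<subseteq> BB (J \<union> K)" using that pJ(2) pvK(2) BBU unfolding weak_le_def by auto
        ultimately show ?thesis using M(2) unfolding weak_le_def by auto
      qed
      ultimately show ?thesis using M(1) lpJ by auto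
    qed
    have "wmeet (parab u J) (parab v K) = M"
      unfolding wmeet_def
    proof (rule the_equality)
      show "?Q M" by (rule QM)
      fix x assume Qx: "?Q x"
      then have "Inv x = Inv M" using QM lpJ M(1) unfolding weak_le_def by auto
      then show "x = M" using Inv_inj Qx M(1) lpJ by metis
    qed
    then show ?thesis unfolding M_def w_def .
  qed
  have iii: "J \<subseteq> GDes v \<and> K \<subseteq> GDes u \<longrightarrow>
         wjoin (parab u J) (parab v K) = parab (wjoin u v) (J \<inter> K)"
  proof
    assume gd: "J \<subseteq> GDes v \<and> K \<subseteq> GDes u"
    have G1: "PP n - BB J \<subseteq> Inv v" using GDes_cross[of J v n] gd lu by auto
    have G2: "PP n - BB K \<subseteq> Inv u" using GDes_cross[of K u n] gd lu by auto
    define x where "x = wjoin u v"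
    have x: "x \<in> Sn n" "Inv x = (Inv u \<union> Inv v)\<^sup>+" using join_ex[OF uS vS] unfolding x_def by auto
    define M where "M = parab x (J \<inter> K)"
    have M: "M \<in> Sn n" "Inv M = Inv x \<inter> BB (J \<inter> K)" using parab_props[OF x(1) JK1(2)] unfolding M_def by auto
    let ?Q = "\<lambda>w. w \<in> Sn (length (parab u J)) \<and> weak_le (parab u J) w \<and> weak_le (parab v K) w \<and>
     (\<forall>z \<in> Sn (length (parab u J)). weak_le (parab u J) z \<and> weak_le (parab v K) z \<longrightarrow> weak_le w z)"
    have QM: "?Q M"
    proof -
      have "Inv u \<subseteq> Inv x" "Inv v \<subseteq> Inv x" using x(2) by auto
      then have "weak_le (parab u J) M" "weak_le (parab v K) M"
        using M(2) pJ(2) pvK(2) BBI unfolding weak_le_def by auto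
      moreover have "weak_le M z" if "z \<in> Sn n" "weak_le (parab u J) z" "weak_le (parab v K) z" for z
      proof -
        have A1: "Inv u \<inter> BB J \<subseteq> Inv z" and A2: "Inv v \<inter> BB K \<subseteq> Inv z"
          using that pJ(2) pvK(2) unfolding weak_le_def by auto
        have tz: "trans (Inv z)" using tc_Inv[of z] unfolding tc_def by blast
        have zP: "Inv z \<subseteq> PP n" using Inv_PP[of z] Sn_len[OF that(1)] by simp
        define S where "S = Inv z \<union> ((PP n - BB J) \<inter> (PP n - BB K))"
        have tS: "trans S"
          unfolding trans_def
        proof (intro allI impI)
          fix a b c assume ab: "(a, b) \<in> S" and bc: "(b, c) \<in> S"
          have abP: "(a, b) \<in> PP n" "(b, c) \<in> PP n" using ab bc zP unfolding S_def by auto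
          show "(a, c) \<in> S"
          proof (cases "(a, b) \<in> Inv z \<and> (b, c) \<in> Inv z")
            case True
            then show ?thesis using tz unfolding S_def trans_def by blast
          next
            case False
            then have "(a, b) \<in> (PP n - BB J) \<inter> (PP n - BB K) \<or> (b, c) \<in> (PP n - BB J) \<inter> (PP n - BB K)"
              using ab bc unfolding S_def by blast
            then have "(a, c) \<in> (PP n - BB J) \<inter> (PP n - BB K)"
              using abP unfolding PP_def BB_def by (auto, (meson less_trans order.strict_implies_order order_trans)+)
            then show ?thesis unfolding S_def by blast
          qed
        qed
        have "Inv u \<union> Inv v \<subseteq> S"
        proof
          fix y assume y: "y \<in> Inv u \<union> Inv v"
          have yP: "y \<in> PP n" using y Inv_PP[of u] Inv_PP[of v] lu by auto
          show "y \<in> S"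
          proof (cases "y \<in> BB J")
            case True
            then show ?thesis using y A1 A2 G1 G2 yP unfolding S_def by (cases "y \<in> BB K") auto
          next
            case False
            then show ?thesis using y A1 A2 G1 G2 yP unfolding S_def by (cases "y \<in> BB K") auto
          qed
        qed
        then have "Inv x \<subseteq> S" using x(2) tS by (metis trancl_id trancl_mono subsetI)
        moreover have "y \<in> Inv z" if "y \<in> S" "y \<in> BB (J \<inter> K)" for y
        proof (cases "y \<in> Inv z")
          case False
          obtain i k where y: "y = (i, k)" by fastforce
          have "(i, k) \<in> PP n" "(i, k) \<notin> BB J" "(i, k) \<notin> BB K" using that False y unfolding S_def by auto
          then show ?thesis using cross_lemma[OF tz A1 A2 G1 G2] that(2) y by blast
        qed
        ultimately show ?thesis using M(2) unfolding weak_le_def by auto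
      qed
      ultimately show ?thesis using M(1) lpJ by auto
    qed
    have "wjoin (parab u J) (parab v K) = M"
      unfolding wjoin_def
    proof (rule the_equality)
      show "?Q M" by (rule QM)
      fix w' assume Qx: "?Q w'"
      then have "Inv w' = Inv M" using QM lpJ M(1) unfolding weak_le_def by auto
      then show "w' = M" using Inv_inj Qx M(1) lpJ by metis
    qed
    then show "wjoin (parab u J) (parab v K) = parab (wjoin u v) (J \<inter> K)" unfolding M_def x_def .
  qed
  show ?thesis using i1 i2 ii iii by blast
qed

end
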